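(* Let $X$ and $Y$ be completely regular Hausdorff spaces and $c: X\times Y\to\mathbb{R}$ a bounded function with property (H). Let $R: C_b(X)\times C_b(Y)\to\mathbb{R}\cup\{-\infty\}$ be a proper function (not identically $-\infty$) such that: (i) $R$ is $\oplus$-nondecreasing; (ii) for every $C\in\mathcal{E}(X)$ and $D\in\mathcal{E}(Y)$, the restriction of $R$ to $C\times D$ is upper semicontinuous for the product of the topologies $\mathcal{T}_p$ (pointwise convergence) on $C$ and on $D$. Then the problem $$v_{\max}(\mathbf{GDP}):=\sup\{R(\xi,\zeta):\ \xi\in C_b(X),\ \zeta\in C_b(Y),\ \xi\oplus\zeta\le c\}$$ has a solution of the form $(\xi_0^{c\bar c},\xi_0^c)\in C_b(X)\times C_b(Y)$ for some $\xi_0\in C_b(X)$; i.e. $\xi_0^{c\bar c}\oplus\xi_0^c\le c$ and $R(\xi_0^{c\bar c},\xi_0^c)=v_{\max}(\mathbf{GDP})$.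
   Context: $C_b(Z)$: real-valued bounded continuous functions on $Z$; $\mathcal{T}_p$: topology of pointwise convergence; $\mathcal{E}(Z)$: family of uniformly bounded equicontinuous subsets of $C_b(Z)$. $(\phi\oplus\psi)(x,y):=\phi(x)+\psi(y)$, and $\phi\oplus\psi\le\phi'\oplus\psi'$ means pointwise inequality on $X\times Y$. $R$ is $\oplus$-nondecreasing if $\phi\oplus\psi\le\phi'\oplus\psi'$ implies $R(\phi,\psi)\le R(\phi',\psi')$. For $\xi: X\to\mathbb{R}$, $\xi^c(y):=\inf_{x\in X}\{c(x,y)-\xi(x)\}$; for $\zeta:Y\to\mathbb{R}$, $\zeta^{\bar c}(x):=\inf_{y\in Y}\{c(x,y)-\zeta(y)\}$; $\xi^{c\bar c}:=(\xi^c)^{\bar c}$. With $\overline{d}_c(x,x'):=\sup_{y}|c(x,y)-c(x',y)|$ and $\underline{d}_c(y,y'):=\sup_{x}|c(x,y)-c(x,y')|$, $c$ has property (H) if $\lim_{x\to x_0}\overline{d}_c(x,x_0)=0$ for every $x_0\in X$ and $\lim_{y\to y_0}\underline{d}_c(y,y_0)=0$ for every $y_0\in Y$. *)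

theory Defs
  imports "HOL-Analysis.Analysis"
begin

definition Cb :: "('a::topological_space \<Rightarrow> real) set" where
  "Cb = {f. continuous_on UNIV f \<and> bounded (range f)}"

definition oplus :: "('a \<Rightarrow> real) \<Rightarrow> ('b \<Rightarrow> real) \<Rightarrow> 'a \<Rightarrow> 'b \<Rightarrow> real" where
  "oplus \<phi> \<psi> = (\<lambda>x y. \<phi> x + \<psi> y)"

definition unif_bdd_equicont :: "('a::topological_space \<Rightarrow> real) set \<Rightarrow> bool" where
  "unif_bdd_equicont C \<longleftrightarrow> C \<subseteq> Cb \<and>
     (\<exists>M. \<forall>f\<in>C. \<forall>z. \<bar>f z\<bar> \<le> M) \<and>
     (\<forall>z. \<forall>\<epsilon>>0. \<exists>U. open U \<and> z \<in> U \<and> (\<forall>f\<in>C. \<forall>z'\<in>U. \<bar>f z' - f z\<bar> < \<epsilon>))"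

definition ctrans :: "('a \<Rightarrow> 'b \<Rightarrow> real) \<Rightarrow> ('a \<Rightarrow> real) \<Rightarrow> 'b \<Rightarrow> real" where
  "ctrans c \<xi> = (\<lambda>y. INF x. c x y - \<xi> x)"

definition cbtrans :: "('a \<Rightarrow> 'b \<Rightarrow> real) \<Rightarrow> ('b \<Rightarrow> real) \<Rightarrow> 'a \<Rightarrow> real" where
  "cbtrans c \<zeta> = (\<lambda>x. INF y. c x y - \<zeta> y)"

definition dbar :: "('a \<Rightarrow> 'b \<Rightarrow> real) \<Rightarrow> 'a \<Rightarrow> 'a \<Rightarrow> real" where
  "dbar c x x' = (SUP y. \<bar>c x y - c x' y\<bar>)"

definition dunder :: "('a \<Rightarrow> 'b \<Rightarrow> real) \<Rightarrow> 'b \<Rightarrow> 'b \<Rightarrow> real" where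
  "dunder c y y' = (SUP x. \<bar>c x y - c x y'\<bar>)"

definition property_H :: "('a::topological_space \<Rightarrow> 'b::topological_space \<Rightarrow> real) \<Rightarrow> bool" where
  "property_H c \<longleftrightarrow>
     (\<forall>x0. ((\<lambda>x. dbar c x x0) \<longlongrightarrow> 0) (at x0)) \<and>
     (\<forall>y0. ((\<lambda>y. dunder c y y0) \<longlongrightarrow> 0) (at y0))"

definition usc_on :: "'a::topological_space set \<Rightarrow> ('a \<Rightarrow> ereal) \<Rightarrow> bool" where
  "usc_on S f \<longleftrightarrow> (\<forall>p\<in>S. \<forall>t. f p < t \<longrightarrow>
      (\<exists>U. open U \<and> p \<in> U \<and> (\<forall>q\<in>U \<inter> S. f q < t)))"

definition vmax_GDP :: "('a::topological_space \<Rightarrow> 'b::topological_space \<Rightarrow> real)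
    \<Rightarrow> (('a \<Rightarrow> real) \<Rightarrow> ('b \<Rightarrow> real) \<Rightarrow> ereal) \<Rightarrow> ereal" where
  "vmax_GDP c R = (SUP p \<in> {(\<xi>, \<zeta>). \<xi> \<in> Cb \<and> \<zeta> \<in> Cb \<and> oplus \<xi> \<zeta> \<le> c}. R (fst p) (snd p))"

end

theory Submission imports Defs begin

lemma bdd_fun: assumes "\<forall>x y. \<bar>c x y\<bar> \<le> (M::real)" and that: "\<forall>x. \<bar>g x\<bar> \<le> A"
  shows "bdd_below (range (\<lambda>x. c x y - g x))"
proof -
  have "\<forall>x. - M - A \<le> c x y - g x"
  proof
    fix x have "\<bar>c x y\<bar> \<le> M" "\<bar>g x\<bar> \<le> A" using assms that by auto
    then show "- M - A \<le> c x y - g x" by (simp add: abs_le_iff)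
  qed
  then show ?thesis by (auto intro: bdd_belowI2)
qed

lemma ct_le: assumes "\<forall>x y. \<bar>c x y\<bar> \<le> (M::real)" "\<forall>x. \<bar>g x\<bar> \<le> A"
  shows "ctrans c g y \<le> c x y - g x"
  unfolding ctrans_def by (rule cINF_lower[OF bdd_fun[OF assms(1) assms(2)]]) simp

lemma ct_ge: assumes "\<And>x. t \<le> c x y - g x"
  shows "t \<le> ctrans c g y"
  unfolding ctrans_def by (rule cINF_greatest) (auto simp: assms)

lemma ct_bnd: assumes "\<forall>x y. \<bar>c x y\<bar> \<le> (M::real)" "\<forall>x. \<bar>g x\<bar> \<le> A"
  shows "\<bar>ctrans c g y\<bar> \<le> M + A"
proof -
  have "ctrans c g y \<le> c undefined y - g undefined" by (rule ct_le[OF assms])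
  moreover have "- M - A \<le> ctrans c g y"
  proof (rule ct_ge)
    fix x have "\<bar>c x y\<bar> \<le> M" "\<bar>g x\<bar> \<le> A" using assms by auto
    then show "- M - A \<le> c x y - g x" by (simp add: abs_le_iff)
  qed
  moreover have "c undefined y - g undefined \<le> M + A"
  proof -
    have "\<bar>c undefined y\<bar> \<le> M" "\<bar>g undefined\<bar> \<le> A" using assms by auto
    then show ?thesis by (simp add: abs_le_iff)
  qed
  ultimately show ?thesis by linarith
qed

lemma du_bdd: assumes "\<forall>x y. \<bar>c x y\<bar> \<le> (M::real)"
  shows "bdd_above (range (\<lambda>x. \<bar>c x y - c x y'\<bar>))"
proof -
  have "\<forall>x. \<bar>c x y - c x y'\<bar> \<le> 2*M"
  proof
    fix x have "\<bar>c x y\<bar> \<le> M" "\<bar>c x y'\<bar> \<le> M" using assms by auto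
    then show "\<bar>c x y - c x y'\<bar> \<le> 2*M" by (simp add: abs_le_iff)
  qed
  then show ?thesis by (auto intro: bdd_aboveI2)
qed

lemma du_ge: assumes "\<forall>x y. \<bar>c x y\<bar> \<le> (M::real)"
  shows "\<bar>c x y - c x y'\<bar> \<le> dunder c y y'"
  unfolding dunder_def by (rule cSUP_upper[OF _ du_bdd[OF assms]]) simp

lemma du_le: assumes "\<forall>x y. \<bar>c x y\<bar> \<le> (M::real)"
  shows "dunder c y y' \<le> 2*M"
  unfolding dunder_def
proof (rule cSUP_least)
  fix x have "\<bar>c x y\<bar> \<le> M" "\<bar>c x y'\<bar> \<le> M" using assms by auto
  then show "\<bar>c x y - c x y'\<bar> \<le> 2*M" by (simp add: abs_le_iff)
qed simp

lemma ct_lip1: assumes "\<forall>x y. \<bar>c x y\<bar> \<le> (M::real)" "\<forall>x. \<bar>g x\<bar> \<le> A"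
  shows "ctrans c g y - dunder c y y' \<le> ctrans c g y'"
proof (rule ct_ge)
  fix x
  have "ctrans c g y \<le> c x y - g x" by (rule ct_le[OF assms])
  moreover have "\<bar>c x y - c x y'\<bar> \<le> dunder c y y'" by (rule du_ge[OF assms(1)])
  ultimately show "ctrans c g y - dunder c y y' \<le> c x y' - g x" by linarith
qed

lemma du_sym: "dunder c y y' = dunder c y' y"
  unfolding dunder_def by (simp add: abs_minus_commute)

lemma ct_lip: assumes "\<forall>x y. \<bar>c x y\<bar> \<le> (M::real)" "\<forall>x. \<bar>g x\<bar> \<le> A"
  shows "\<bar>ctrans c g y - ctrans c g y'\<bar> \<le> dunder c y y'"
  using ct_lip1[OF assms, of y y'] ct_lip1[OF assms, of y' y] du_sym[of c y y'] by linarith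

lemma cb_eq: "cbtrans c = ctrans (\<lambda>y x. c x y)"
  unfolding cbtrans_def ctrans_def by auto

lemma db_eq: "dbar c = dunder (\<lambda>y x. c x y)"
  unfolding dbar_def dunder_def by (auto simp: fun_eq_iff)

definition L :: "('i \<Rightarrow> 'z \<Rightarrow> real) \<Rightarrow> real \<Rightarrow> ('z \<Rightarrow> real) set" where
  "L c B = {g. (\<forall>z. \<bar>g z\<bar> \<le> B) \<and> (\<forall>z z0. \<bar>g z - g z0\<bar> \<le> dunder c z z0)}"

lemma L_Cb: assumes H: "\<forall>z0. ((\<lambda>z. dunder c z z0) \<longlongrightarrow> 0) (at z0)"
  and g: "g \<in> L c B"
  shows "g \<in> Cb"
proof -
  have "(g \<longlongrightarrow> g z0) (at z0)" for z0
  proof -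
    have "((\<lambda>z. g z - g z0) \<longlongrightarrow> 0) (at z0)"
      by (rule Lim_null_comparison[OF _ H[rule_format, of z0]]) (use g in \<open>auto simp: L_def\<close>)
    then show ?thesis by (simp add: LIM_zero_iff)
  qed
  then have "continuous_on UNIV g" by (simp add: continuous_on_def)
  moreover have "bounded (range g)" using g unfolding L_def bounded_iff by auto
  ultimately show ?thesis by (simp add: Cb_def)
qed

lemma L_equi: assumes H: "\<forall>z0. ((\<lambda>z. dunder c z z0) \<longlongrightarrow> 0) (at z0)"
  shows "unif_bdd_equicont (L c B)"
  unfolding unif_bdd_equicont_def
proof (intro conjI)
  show "L c B \<subseteq> Cb" using L_Cb[OF H] by auto
  show "\<exists>M. \<forall>f\<in>L c B. \<forall>z. \<bar>f z\<bar> \<le> M" by (auto simp: L_def)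
  show "\<forall>z \<epsilon>. 0 < \<epsilon> \<longrightarrow> (\<exists>U. open U \<and> z \<in> U \<and> (\<forall>f\<in>L c B. \<forall>z'\<in>U. \<bar>f z' - f z\<bar> < \<epsilon>))"
  proof (intro allI impI)
    fix z and e :: real assume e: "0 < e"
    have "\<forall>\<^sub>F z' in at z. dunder c z' z < e"
      using H[rule_format, of z] e by (simp add: order_tendstoD(2))
    then obtain U where U: "open U" "z \<in> U" "\<forall>z'\<in>U. z' \<noteq> z \<longrightarrow> dunder c z' z < e"
      unfolding eventually_at_topological by auto
    show "\<exists>U. open U \<and> z \<in> U \<and> (\<forall>f\<in>L c B. \<forall>z'\<in>U. \<bar>f z' - f z\<bar> < e)"
    proof (intro exI conjI ballI)
      fix f z' assume f: "f \<in> L c B" and z': "z' \<in> U"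
      show "\<bar>f z' - f z\<bar> < e"
      proof (cases "z' = z")
        case True then show ?thesis using e by simp
      next
        case False
        have "\<bar>f z' - f z\<bar> \<le> dunder c z' z" using f unfolding L_def by blast
        moreover have "dunder c z' z < e" using U z' False by blast
        ultimately show ?thesis by linarith
      qed
    qed (use U in auto)
  qed
qed

lemma L_compact: fixes c :: "'i \<Rightarrow> 'z \<Rightarrow> real" shows "compact (L c B)"
proof -
  have cP: "compact (PiE UNIV (\<lambda>_::'z. {-B..B}))"
    using compactin_PiE[of "\<lambda>_. euclidean" UNIV "\<lambda>_::'z. {-B..B}"]
    by (simp add: euclidean_product_topology)
  have c1: "closed {g::'z\<Rightarrow>real. \<bar>g z\<bar> \<le> B}" for z
    by (intro closed_Collect_le continuous_intros continuous_on_product_coordinates)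
  have c2: "closed {g::'z\<Rightarrow>real. \<bar>g z - g z0\<bar> \<le> dunder c z z0}" for z z0
    by (intro closed_Collect_le continuous_intros continuous_on_product_coordinates)
  have eq: "L c B = (\<Inter>z. {g. \<bar>g z\<bar> \<le> B}) \<inter> (\<Inter>z. \<Inter>z0. {g. \<bar>g z - g z0\<bar> \<le> dunder c z z0})"
    unfolding L_def by blast
  have cl: "closed (L c B)"
    unfolding eq by (intro closed_Int closed_INT ballI c1 c2)
  have sub: "L c B \<subseteq> PiE UNIV (\<lambda>_. {-B..B})"
    unfolding L_def by (auto simp: abs_le_iff) (metis minus_le_iff)
  have "L c B = PiE UNIV (\<lambda>_. {-B..B}) \<inter> L c B" using sub by blast
  also have "compact \<dots>" by (rule compact_Int_closed[OF cP cl])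
  finally show ?thesis .
qed

lemma usc_max:
  fixes f :: "'p::topological_space \<Rightarrow> ereal"
  assumes K: "compact K" "K \<noteq> {}"
    and u: "\<forall>p\<in>K. \<forall>t. f p < t \<longrightarrow> (\<exists>U. open U \<and> p \<in> U \<and> (\<forall>q\<in>U \<inter> K. f q < t))"
  shows "\<exists>p\<in>K. \<forall>q\<in>K. f q \<le> f p"
proof (rule ccontr)
  assume "\<not> ?thesis"
  then have "\<forall>p\<in>K. \<exists>q\<in>K. f p < f q" by (auto simp: not_le)
  then obtain Q where Q: "\<And>p. p \<in> K \<Longrightarrow> Q p \<in> K \<and> f p < f (Q p)" by metis
  have "\<forall>p\<in>K. \<exists>U. open U \<and> p \<in> U \<and> (\<forall>q\<in>U \<inter> K. f q < f (Q p))"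
    using u Q by blast
  then obtain U where U: "\<And>p. p \<in> K \<Longrightarrow> open (U p) \<and> p \<in> U p \<and> (\<forall>q\<in>U p \<inter> K. f q < f (Q p))"
    by metis
  have "K \<subseteq> (\<Union>p\<in>K. U p)" using U by auto
  then obtain F where F: "F \<subseteq> K" "finite F" "K \<subseteq> (\<Union>p\<in>F. U p)"
    using compactE_image[OF K(1), of K U] U by blast
  then have "F \<noteq> {}" using K by auto
  define m where "m = Max ((\<lambda>p. f (Q p)) ` F)"
  have "m \<in> (\<lambda>p. f (Q p)) ` F" unfolding m_def using F(2) \<open>F \<noteq> {}\<close> by (intro Max_in) auto
  then obtain p0 where p0a: "p0 \<in> F" "f (Q p0) = m" by auto
  have "\<forall>p\<in>F. f (Q p) \<le> m" unfolding m_def using F(2) by (auto intro: Max_ge)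
  with p0a have p0: "p0 \<in> F" "\<forall>p\<in>F. f (Q p) \<le> f (Q p0)" by auto
  have "Q p0 \<in> K" using Q F p0 by auto
  then obtain p where p: "p \<in> F" "Q p0 \<in> U p" using F by auto
  then have "f (Q p0) < f (Q p)" using U[of p] F \<open>Q p0 \<in> K\<close> by auto
  with p0 p show False by (meson leD)
qed

theorem mainTheorem3:
  fixes c :: "'a::t2_space \<Rightarrow> 'b::t2_space \<Rightarrow> real"
    and R :: "('a \<Rightarrow> real) \<Rightarrow> ('b \<Rightarrow> real) \<Rightarrow> ereal"
  assumes crX: "completely_regular_space (euclidean :: 'a topology)"
    and crY: "completely_regular_space (euclidean :: 'b topology)"
    and c_bdd: "\<exists>M. \<forall>x y. \<bar>c x y\<bar> \<le> M"
    and c_H: "property_H c"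
    and R_no_pinf: "\<forall>\<phi>\<in>Cb. \<forall>\<psi>\<in>Cb. R \<phi> \<psi> \<noteq> \<infinity>"
    and R_proper: "\<exists>\<phi>\<in>Cb. \<exists>\<psi>\<in>Cb. R \<phi> \<psi> \<noteq> -\<infinity>"
    and R_mono: "\<forall>\<phi>\<in>Cb. \<forall>\<psi>\<in>Cb. \<forall>\<phi>'\<in>Cb. \<forall>\<psi>'\<in>Cb.
                   oplus \<phi> \<psi> \<le> oplus \<phi>' \<psi>' \<longrightarrow> R \<phi> \<psi> \<le> R \<phi>' \<psi>'"
    and R_usc: "\<forall>C D. unif_bdd_equicont C \<and> unif_bdd_equicont D \<longrightarrow>
                   usc_on (C \<times> D) (\<lambda>p. R (fst p) (snd p))"
  shows "\<exists>\<xi>0\<in>Cb. cbtrans c (ctrans c \<xi>0) \<in> Cb \<and> ctrans c \<xi>0 \<in> Cb \<and>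
           oplus (cbtrans c (ctrans c \<xi>0)) (ctrans c \<xi>0) \<le> c \<and>
           R (cbtrans c (ctrans c \<xi>0)) (ctrans c \<xi>0) = vmax_GDP c R"
proof -
  obtain M where M: "\<forall>x y. \<bar>c x y\<bar> \<le> M" using c_bdd by blast
  define c' where "c' = (\<lambda>y x. c x y)"
  have M': "\<forall>y x. \<bar>c' y x\<bar> \<le> M" using M by (simp add: c'_def)
  have M0: "0 \<le> M" using M by (meson abs_ge_zero order_trans)
  have Hc: "\<forall>y0. ((\<lambda>y. dunder c y y0) \<longlongrightarrow> 0) (at y0)"
    using c_H by (simp add: property_H_def)
  have Hc': "\<forall>x0. ((\<lambda>x. dunder c' x x0) \<longlongrightarrow> 0) (at x0)"
    using c_H by (simp add: property_H_def c'_def db_eq[symmetric])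
  have cbeq: "cbtrans c = ctrans c'" by (simp add: cb_eq c'_def)
  have du0: "0 \<le> dunder c y y'" for y y' using du_ge[OF M, of undefined y y'] by linarith
  have du0': "0 \<le> dunder c' x x'" for x x' using du_ge[OF M', of undefined x x'] by linarith
  define B where "B = 3 * M"
  define C where "C = L c' B"
  define D where "D = L c B"
  define K where "K = {p \<in> C \<times> D. \<forall>x y. fst p x + snd p y \<le> c x y}"
  have CCb: "C \<subseteq> Cb" unfolding C_def using L_Cb[OF Hc'] by blast
  have DCb: "D \<subseteq> Cb" unfolding D_def using L_Cb[OF Hc] by blast
  have Keq: "K = (C \<times> D) \<inter> (\<Inter>x. \<Inter>y. {p. fst p x + snd p y \<le> c x y})"
    unfolding K_def by blast
  have clxy: "closed {p::('a\<Rightarrow>real)\<times>('b\<Rightarrow>real). fst p x + snd p y \<le> c x y}" for x y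
  proof -
    have "continuous_on UNIV (\<lambda>p::('a\<Rightarrow>real)\<times>('b\<Rightarrow>real). fst p x)"
      by (rule continuous_on_compose2[OF continuous_on_product_coordinates continuous_on_fst]) auto
    moreover have "continuous_on UNIV (\<lambda>p::('a\<Rightarrow>real)\<times>('b\<Rightarrow>real). snd p y)"
      by (rule continuous_on_compose2[OF continuous_on_product_coordinates continuous_on_snd]) auto
    ultimately show ?thesis by (intro closed_Collect_le continuous_intros) auto
  qed
  have Kc: "compact K"
    unfolding Keq C_def D_def
    by (intro compact_Int_closed compact_Times L_compact closed_INT ballI clxy)
  have "(\<lambda>_. -M, \<lambda>_. 0) \<in> K"
    unfolding K_def C_def D_def L_def B_def using M M0 du0 du0'
    by (auto simp: abs_le_iff) (metis minus_le_iff)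
  then have Kne: "K \<noteq> {}" by blast
  have usc: "usc_on (C \<times> D) (\<lambda>p. R (fst p) (snd p))"
    using R_usc L_equi[OF Hc'] L_equi[OF Hc] unfolding C_def D_def by blast
  have "\<forall>p\<in>K. \<forall>t. R (fst p) (snd p) < t \<longrightarrow>
      (\<exists>U. open U \<and> p \<in> U \<and> (\<forall>q\<in>U \<inter> K. R (fst q) (snd q) < t))"
  proof (intro ballI allI impI)
    fix p t assume p: "p \<in> K" and t: "R (fst p) (snd p) < t"
    have "p \<in> C \<times> D" using p K_def by blast
    then obtain U where "open U" "p \<in> U" "\<forall>q\<in>U \<inter> (C \<times> D). R (fst q) (snd q) < t"
      using usc t unfolding usc_on_def by blast
    moreover have "K \<subseteq> C \<times> D" unfolding K_def by blast
    ultimately show "\<exists>U. open U \<and> p \<in> U \<and> (\<forall>q\<in>U \<inter> K. R (fst q) (snd q) < t)" by blast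
  qed
  from usc_max[OF Kc Kne this] obtain ps where ps: "ps \<in> K"
    "\<forall>q\<in>K. R (fst q) (snd q) \<le> R (fst ps) (snd ps)" by blast
  define \<phi>s where "\<phi>s = fst ps"
  define \<psi>s where "\<psi>s = snd ps"
  have \<phi>sC: "\<phi>s \<in> C" and \<psi>sD: "\<psi>s \<in> D" and ps_le: "\<forall>x y. \<phi>s x + \<psi>s y \<le> c x y"
    using ps(1) unfolding K_def \<phi>s_def \<psi>s_def by auto
  have psmax: "R \<phi> \<psi> \<le> R \<phi>s \<psi>s" if "(\<phi>, \<psi>) \<in> K" for \<phi> \<psi>
    using ps(2) that unfolding \<phi>s_def \<psi>s_def by fastforce
  have claim1: "R \<xi> \<zeta> \<le> R \<phi>s \<psi>s" if \<xi>: "\<xi> \<in> Cb" and \<zeta>: "\<zeta> \<in> Cb" and feas: "oplus \<xi> \<zeta> \<le> c" for \<xi> \<zeta>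
  proof -
    obtain A where A: "\<forall>x. \<bar>\<xi> x\<bar> \<le> A"
      using \<xi> unfolding Cb_def bounded_iff by auto
    have feas': "\<xi> x + \<zeta> y \<le> c x y" for x y
      using feas by (simp add: le_fun_def oplus_def)
    define a where "a = ctrans c \<xi> undefined"
    define \<psi> where "\<psi> = (\<lambda>y. ctrans c \<xi> y - a)"
    define \<phi> where "\<phi> = ctrans c' \<psi>"
    have \<psi>lip: "\<bar>\<psi> y - \<psi> y'\<bar> \<le> dunder c y y'" for y y'
      using ct_lip[OF M A, of y y'] by (simp add: \<psi>_def)
    have \<psi>b: "\<bar>\<psi> y\<bar> \<le> 2 * M" for y
      using \<psi>lip[of y undefined] du_le[OF M, of y undefined] by (simp add: \<psi>_def a_def)
    have \<psi>b3: "\<bar>\<psi> y\<bar> \<le> 3 * M" for y using \<psi>b[of y] M0 by linarith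
    have \<psi>D: "\<psi> \<in> D" unfolding D_def L_def B_def using \<psi>lip \<psi>b3 by blast
    have \<psi>b': "\<forall>y. \<bar>\<psi> y\<bar> \<le> 2 * M" using \<psi>b by blast
    have \<phi>b: "\<bar>\<phi> x\<bar> \<le> M + 2 * M" for x
      unfolding \<phi>_def by (rule ct_bnd[OF M' \<psi>b'])
    have \<phi>lip: "\<bar>\<phi> x - \<phi> x'\<bar> \<le> dunder c' x x'" for x x'
      unfolding \<phi>_def by (rule ct_lip[OF M' \<psi>b'])
    have \<phi>C: "\<phi> \<in> C" unfolding C_def L_def B_def using \<phi>lip \<phi>b by auto
    have le1: "\<phi> x + \<psi> y \<le> c x y" for x y
      using ct_le[OF M' \<psi>b', of x y] by (simp add: \<phi>_def c'_def)
    have K1: "(\<phi>, \<psi>) \<in> K" unfolding K_def using \<phi>C \<psi>D le1 by auto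
    have z: "\<zeta> y \<le> ctrans c \<xi> y" for y
      by (rule ct_ge) (use feas' in \<open>simp add: algebra_simps\<close>)
    have x: "\<xi> x + a \<le> \<phi> x" for x
      unfolding \<phi>_def
    proof (rule ct_ge)
      fix y show "\<xi> x + a \<le> c' y x - \<psi> y"
        using ct_le[OF M A, of y x] by (simp add: c'_def \<psi>_def)
    qed
    have "oplus \<xi> \<zeta> \<le> oplus \<phi> \<psi>"
      unfolding le_fun_def oplus_def
    proof (intro allI)
      fix x y show "\<xi> x + \<zeta> y \<le> \<phi> x + \<psi> y" using x[of x] z[of y] by (simp add: \<psi>_def)
    qed
    then have "R \<xi> \<zeta> \<le> R \<phi> \<psi>"
      using R_mono \<xi> \<zeta> \<phi>C \<psi>D CCb DCb by blast
    also have "\<dots> \<le> R \<phi>s \<psi>s" by (rule psmax[OF K1])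
    finally show ?thesis .
  qed
  have \<phi>sb: "\<forall>x. \<bar>\<phi>s x\<bar> \<le> B" using \<phi>sC unfolding C_def L_def by blast
  define \<eta> where "\<eta> = ctrans c \<phi>s"
  have \<eta>b: "\<forall>y. \<bar>\<eta> y\<bar> \<le> M + B" unfolding \<eta>_def using ct_bnd[OF M \<phi>sb] by blast
  have \<eta>L: "\<eta> \<in> L c (M + B)" unfolding L_def \<eta>_def using ct_bnd[OF M \<phi>sb] ct_lip[OF M \<phi>sb] by blast
  have \<eta>Cb: "\<eta> \<in> Cb" by (rule L_Cb[OF Hc \<eta>L])
  define \<theta> where "\<theta> = ctrans c' \<eta>"
  have \<theta>L: "\<theta> \<in> L c' (M + (M + B))" unfolding L_def \<theta>_def using ct_bnd[OF M' \<eta>b] ct_lip[OF M' \<eta>b] by blast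
  have \<theta>Cb: "\<theta> \<in> Cb" by (rule L_Cb[OF Hc' \<theta>L])
  have feas: "oplus \<theta> \<eta> \<le> c"
    unfolding le_fun_def oplus_def
  proof (intro allI)
    fix x y show "\<theta> x + \<eta> y \<le> c x y" using ct_le[OF M' \<eta>b, of x y] by (simp add: \<theta>_def c'_def)
  qed
  have \<phi>le: "\<phi>s x \<le> \<theta> x" for x
    unfolding \<theta>_def
  proof (rule ct_ge)
    fix y show "\<phi>s x \<le> c' y x - \<eta> y" using ct_le[OF M \<phi>sb, of y x] by (simp add: c'_def \<eta>_def)
  qed
  have \<psi>le: "\<psi>s y \<le> \<eta> y" for y
    unfolding \<eta>_def by (rule ct_ge) (use ps_le in \<open>simp add: algebra_simps\<close>)
  have "oplus \<phi>s \<psi>s \<le> oplus \<theta> \<eta>"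
    unfolding le_fun_def oplus_def using \<phi>le \<psi>le by (simp add: add_mono)
  then have r1: "R \<phi>s \<psi>s \<le> R \<theta> \<eta>"
    using R_mono \<phi>sC \<psi>sD CCb DCb \<theta>Cb \<eta>Cb by blast
  have r2: "R \<theta> \<eta> \<le> vmax_GDP c R"
    unfolding vmax_GDP_def
    by (rule SUP_upper2[where i="(\<theta>, \<eta>)"]) (use \<theta>Cb \<eta>Cb feas in auto)
  have r3: "vmax_GDP c R \<le> R \<phi>s \<psi>s"
    unfolding vmax_GDP_def by (rule SUP_least) (auto intro: claim1)
  have "R \<theta> \<eta> = vmax_GDP c R" using r1 r2 r3 by (meson order_antisym order_trans)
  then show ?thesis
    using \<phi>sC CCb \<theta>Cb \<eta>Cb feas unfolding cbeq \<theta>_def \<eta>_def by blast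
qed

end
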